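(* Let $\mathcal I=\mathbb R^d$, $\mathcal T$ its unit sphere, $\mathcal G$ a compact Abelian group with normalized Haar measure $dg$ acting on $\mathcal I$ by a unitary representation, and $\mathcal G_0\subset\mathcal G$ measurable with $V=\int_{\mathcal G_0}dg>0$. Let $\bar\Psi(I):\mathcal G\times\mathcal T\to\mathcal P(\mathbb R)$, $\bar\Psi(I)(g,t)=(\rho_{I,g})^t$, where $\rho_{I,\bar g}(A)=\frac1V\int_{\{g\in\bar g\mathcal G_0:\ gI\in A\}}dg$ and $\rho^t$ is the pushforward of $\rho$ under $I\mapsto\langle I,t\rangle$. Let $\mathcal H$ be a real separable Hilbert space and $\Phi:\mathcal P(\mathbb R)\to\mathcal H$ an embedding, and define $J_\Phi(h)(g,t)=\Phi(h(g,t))$ for $h:\mathcal G\times\mathcal T\to\mathcal P(\mathbb R)$. Let $\bar Q=J_\Phi\circ\bar\Psi$, viewed as a map from $\mathcal I$ to $L^2(\mathcal G\times\mathcal T,\mathcal H)$. Then $\bar Q$ is covariant: $\bar Q(gI)=g\bar Q(I)$ for all $I\in\mathcal I$, $g\in\mathcal G$.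
   Context: $\mathcal P(\mathbb R)$ is the set of Borel probability measures on $\mathbb R$. $L^2(\mathcal G\times\mathcal T,\mathcal H)$ is the space of maps $h:\mathcal G\times\mathcal T\to\mathcal H$ with $\int\|h(g,t)\|^2\,dg\,du(t)<\infty$, $u$ the normalized uniform measure on $\mathcal T$. The action of $\tilde g\in\mathcal G$ on maps $h$ defined on $\mathcal G\times\mathcal T$ is $(\tilde gh)(g,t)=h(\tilde gg,t)$. *)

theory Defs
  imports "HOL-Analysis.Analysis" "HOL-Probability.Probability"
begin

text \<open>The compact Abelian group G is written additively (type class
  topological_ab_group_add); gbar + G0 is the translate of G0.\<close>

definition normalized_haar :: "('g::topological_ab_group_add) measure \<Rightarrow> bool" where
  "normalized_haar mu \<longleftrightarrow> prob_space mu \<and> sets mu = sets borel \<and>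
     (\<forall>g A. A \<in> sets borel \<longrightarrow> emeasure mu ((+) g ` A) = emeasure mu A)"

definition unitary_rep :: "('g::topological_ab_group_add \<Rightarrow> real^'d \<Rightarrow> real^'d) \<Rightarrow> bool" where
  "unitary_rep act \<longleftrightarrow>
     (\<forall>g. linear (act g) \<and> (\<forall>x. norm (act g x) = norm x)) \<and>
     act 0 = id \<and> (\<forall>g h. act (g + h) = act g \<circ> act h) \<and>
     continuous_on UNIV (\<lambda>p. act (fst p) (snd p))"

definition rho :: "'g measure \<Rightarrow> 'g set \<Rightarrow> ('g::topological_ab_group_add \<Rightarrow> real^'d \<Rightarrow> real^'d)
                   \<Rightarrow> real^'d \<Rightarrow> 'g \<Rightarrow> (real^'d) measure" where
  "rho mu G0 act I gbar =
     scale_measure (ennreal (1 / measure mu G0))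
       (distr (density mu (indicator ((+) gbar ` G0))) borel (\<lambda>g. act g I))"

definition proj_meas :: "(real^'d) measure \<Rightarrow> real^'d \<Rightarrow> real measure" where
  "proj_meas r t = distr r borel (\<lambda>x. x \<bullet> t)"

definition Psi_bar :: "'g measure \<Rightarrow> 'g set \<Rightarrow> ('g::topological_ab_group_add \<Rightarrow> real^'d \<Rightarrow> real^'d)
                   \<Rightarrow> real^'d \<Rightarrow> 'g \<times> (real^'d) \<Rightarrow> real measure" where
  "Psi_bar mu G0 act I = (\<lambda>(g, t). proj_meas (rho mu G0 act I g) t)"

definition J_Phi :: "(real measure \<Rightarrow> 'h) \<Rightarrow> ('a \<Rightarrow> real measure) \<Rightarrow> 'a \<Rightarrow> 'h" where
  "J_Phi Phi h = (\<lambda>x. Phi (h x))"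

definition Q_bar :: "'g measure \<Rightarrow> 'g set \<Rightarrow> ('g::topological_ab_group_add \<Rightarrow> real^'d \<Rightarrow> real^'d)
                   \<Rightarrow> (real measure \<Rightarrow> 'h) \<Rightarrow> real^'d \<Rightarrow> 'g \<times> (real^'d) \<Rightarrow> 'h" where
  "Q_bar mu G0 act Phi I = J_Phi Phi (Psi_bar mu G0 act I)"

definition map_act :: "'g::ab_group_add \<Rightarrow> ('g \<times> 'b \<Rightarrow> 'c) \<Rightarrow> 'g \<times> 'b \<Rightarrow> 'c" where
  "map_act gt h = (\<lambda>(g, t). h (gt + g, t))"

end

theory Submission
  imports Defs
begin

theorem theorem10:
  fixes mu :: "('g::{topological_ab_group_add, t2_space}) measure"
    and G0 :: "'g set"
    and act :: "'g \<Rightarrow> real^'d \<Rightarrow> real^'d"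
    and Phi :: "real measure \<Rightarrow> 'h::{real_inner, complete_space, second_countable_topology}"
  assumes "compact (UNIV :: 'g set)"
    and "normalized_haar mu"
    and "unitary_rep act"
    and "G0 \<in> sets mu"
    and "measure mu G0 > 0"
    and "inj_on Phi {P. prob_space P \<and> sets P = sets (borel :: real measure)}"
  shows "\<forall>I g g'. \<forall>t \<in> sphere 0 1.
           Q_bar mu G0 act Phi (act g I) (g', t) = map_act g (Q_bar mu G0 act Phi I) (g', t)"
proof (intro allI ballI)
  fix I g g' and t :: "real^'d"
  have sets: "sets mu = sets borel" using assms(2) normalized_haar_def by blast
  have inv: "\<And>h A. A \<in> sets borel \<Longrightarrow> emeasure mu ((+) h ` A) = emeasure mu A"
    using assms(2) normalized_haar_def by blast
  define T where "T = (\<lambda>h::'g. h + g)"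
  have Tm: "T \<in> measurable mu mu"
  proof -
    have "T \<in> borel_measurable borel"
      unfolding T_def by (intro borel_measurable_continuous_onI continuous_intros)
    then show ?thesis using measurable_cong_sets[OF sets sets] by simp
  qed
  have comp: "\<And>x h. act (x + g) h = act x (act g h)"
    using assms(3) unfolding unitary_rep_def by (simp add: comp_def)
  have cont: "continuous_on UNIV (\<lambda>p. act (fst p) (snd p))"
    using assms(3) unfolding unitary_rep_def by blast
  have Fc: "\<And>J. continuous_on UNIV (\<lambda>h. act h J)"
  proof -
    fix J
    have "continuous_on UNIV ((\<lambda>p. act (fst p) (snd p)) \<circ> (\<lambda>h. (h, J)))"
      by (rule continuous_on_compose) (auto intro!: continuous_intros cont[THEN continuous_on_subset])
    then show "continuous_on UNIV (\<lambda>h. act h J)" by (simp add: comp_def)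
  qed
  have Fm: "\<And>J. (\<lambda>h. act h J) \<in> measurable mu borel"
    using measurable_cong_sets[OF sets refl] borel_measurable_continuous_onI[OF Fc] by metis
  have dT: "distr mu mu T = mu"
  proof (rule measure_eqI)
    show "sets (distr mu mu T) = sets mu" by simp
    fix A assume A: "A \<in> sets (distr mu mu T)"
    hence Ab: "A \<in> sets borel" using sets by simp
    have "T -` A \<inter> space mu = (+) (-g) ` A"
    proof -
      have sp: "space mu = UNIV" using sets_eq_imp_space_eq[OF sets] by simp
      have "\<And>x. (x + g \<in> A) = (x \<in> (+) (-g) ` A)"
      proof
        fix x assume "x + g \<in> A" then show "x \<in> (+) (-g) ` A"
          by (rule rev_image_eqI) (simp add: algebra_simps)
      next
        fix x assume "x \<in> (+) (-g) ` A" then show "x + g \<in> A" by (auto simp: algebra_simps)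
      qed
      then show ?thesis unfolding T_def sp by auto
    qed
    then show "emeasure (distr mu mu T) A = emeasure mu A"
      using A Tm inv[OF Ab, of "-g"] emeasure_distr[OF Tm, of A] by simp
  qed
  have "density mu (indicator ((+) (g + g') ` G0))
      = density (distr mu mu T) (indicator ((+) (g + g') ` G0))" using dT by simp
  also have "\<dots> = distr (density mu (\<lambda>x. indicator ((+) (g + g') ` G0) (T x))) mu T"
  proof (rule density_distr[OF _ Tm])
    have G0b: "G0 \<in> sets borel" using assms(4) sets by simp
    have "(+) (g + g') ` G0 = (\<lambda>x. x - (g + g')) -` G0 \<inter> space borel"
    proof (intro equalityI subsetI)
      fix x assume "x \<in> (+) (g + g') ` G0" then show "x \<in> (\<lambda>x. x - (g + g')) -` G0 \<inter> space borel"
        by (auto simp: algebra_simps)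
    next
      fix x assume "x \<in> (\<lambda>x. x - (g + g')) -` G0 \<inter> space borel"
      then show "x \<in> (+) (g + g') ` G0" by (intro rev_image_eqI[of "x - (g+g')"]) (auto simp: algebra_simps)
    qed
    moreover have "(\<lambda>x::'g. x - (g + g')) \<in> borel_measurable borel"
      by (intro borel_measurable_continuous_onI continuous_intros)
    ultimately have "(+) (g + g') ` G0 \<in> sets borel" using G0b by (metis measurable_sets)
    then have "(+) (g + g') ` G0 \<in> sets mu" using sets by simp
    then show "indicator ((+) (g + g') ` G0) \<in> borel_measurable mu" by simp
  qed
  also have "(\<lambda>x. indicator ((+) (g + g') ` G0) (T x) :: ennreal) = indicator ((+) g' ` G0)"
  proof
    fix x
    have "(T x \<in> (+) (g + g') ` G0) = (x \<in> (+) g' ` G0)"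
      unfolding T_def image_iff
      by (metis add.assoc add.commute add_right_cancel add_left_cancel)
    then show "indicator ((+) (g + g') ` G0) (T x) = (indicator ((+) g' ` G0) x :: ennreal)"
      by (simp add: indicator_def)
  qed
  finally have D: "density mu (indicator ((+) (g + g') ` G0))
      = distr (density mu (indicator ((+) g' ` G0))) mu T" .
  have "distr (density mu (indicator ((+) (g + g') ` G0))) borel (\<lambda>h. act h I)
     = distr (density mu (indicator ((+) g' ` G0))) borel ((\<lambda>h. act h I) \<circ> T)"
    unfolding D
    by (rule distr_distr) (use Fm Tm in auto)
  also have "(\<lambda>h. act h I) \<circ> T = (\<lambda>h. act h (act g I))"
    unfolding T_def by (simp add: comp_def comp)
  finally have "rho mu G0 act (act g I) g' = rho mu G0 act I (g + g')"
    unfolding rho_def by simp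
  then show "Q_bar mu G0 act Phi (act g I) (g', t) = map_act g (Q_bar mu G0 act Phi I) (g', t)"
    by (simp add: Q_bar_def J_Phi_def Psi_bar_def map_act_def)
qed

end
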